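(* Let $E$ be a separable real Hilbert space, let $0<p<\infty$ be such that $p$ is not an even integer, and let $k=\lceil p/2\rceil$. Then for every $x\in E$, $$\lim_{h\to 0}\frac{\sum_{j=0}^{2k}\binom{2k}{j}(-1)^j\|x+(k-j)h\|^p}{\Big(\sum_{j=0}^{2k}\binom{2k}{j}(-1)^j|k-j|^p\Big)\|h\|^p}=\chi_{\{0\}}(x),$$ where the limit is taken over $h\in E\setminus\{0\}$, $h\to 0$, and $\chi_{\{0\}}$ is the indicator function of $\{0\}$ (equal to $1$ at $x=0$ and $0$ otherwise). *)

theory Defs
  imports "HOL-Analysis.Analysis"
begin

end

theory Submission
  imports Defs
begin

lemma rolle_count:
  fixes g g' :: "real \<Rightarrow> real"
  assumes der: "\<And>t. (g has_field_derivative g' t) (at t)"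
  shows "finite Z \<Longrightarrow> card Z = Suc m \<Longrightarrow> (\<forall>z\<in>Z. g z = 0) \<Longrightarrow>
     \<exists>W. finite W \<and> card W = m \<and> (\<forall>w\<in>W. g' w = 0) \<and> W \<subseteq> {Min Z<..<Max Z}"
proof (induction m arbitrary: Z)
  case 0
  then show ?case by (intro exI[of _ "{}"]) auto
next
  case (Suc m)
  define z where "z = Max Z"
  define Z' where "Z' = Z - {z}"
  have ne: "Z \<noteq> {}" using Suc.prems by auto
  have zZ: "z \<in> Z" unfolding z_def using Suc.prems ne by auto
  have fZ': "finite Z'" "card Z' = Suc m" using Suc.prems zZ unfolding Z'_def by auto
  have ne': "Z' \<noteq> {}" using fZ' by auto
  obtain W where W: "finite W" "card W = m" "\<forall>w\<in>W. g' w = 0" "W \<subseteq> {Min Z'<..<Max Z'}"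
    using Suc.IH[OF fZ'] Suc.prems unfolding Z'_def by auto
  define z' where "z' = Max Z'"
  have z'Z': "z' \<in> Z'" unfolding z'_def using fZ' ne' by auto
  have lt: "z' < z" using z'Z' zZ Suc.prems unfolding Z'_def z_def
    by (metis DiffE Max_ge insertI1 order_le_less)
  have "\<exists>w. z' < w \<and> w < z \<and> DERIV g w :> 0"
  proof (rule Rolle[OF lt])
    show "g z' = g z" using Suc.prems z'Z' zZ unfolding Z'_def by auto
    show "continuous_on {z'..z} g"
      by (meson DERIV_continuous_on der has_field_derivative_at_within)
    show "\<And>x. z' < x \<Longrightarrow> x < z \<Longrightarrow> g differentiable (at x)"
      using der real_differentiable_def by blast
  qed
  then obtain w where w: "z' < w" "w < z" "DERIV g w :> 0" by blast
  have gw: "g' w = 0" using w(3) der DERIV_unique by blast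
  have wW: "w \<notin> W" using W(4) w(1) unfolding z'_def by auto
  have minle: "Min Z \<le> Min Z'" using Suc.prems fZ' ne' unfolding Z'_def
    by (simp add: Min_antimono)
  have "Min Z' \<le> z'" using fZ' z'Z' by auto
  show ?case
  proof (intro exI[of _ "insert w W"] conjI)
    show "finite (insert w W)" using W by auto
    show "card (insert w W) = Suc m" using W wW by auto
    show "\<forall>x\<in>insert w W. g' x = 0" using W gw by auto
    have "W \<subseteq> {Min Z<..<Max Z}"
    proof
      fix y assume "y \<in> W"
      then have "Min Z' < y" "y < Max Z'" using W(4) by auto
      moreover have "Max Z' \<le> Max Z" using fZ' ne' Suc.prems unfolding Z'_def
        by (simp add: Max_mono)
      ultimately show "y \<in> {Min Z<..<Max Z}" using minle by auto
    qed
    moreover have "w \<in> {Min Z<..<Max Z}" using w lt \<open>Min Z' \<le> z'\<close> minle unfolding z_def by auto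
    ultimately show "insert w W \<subseteq> {Min Z<..<Max Z}" by auto
  qed
qed

lemma expsum_zeros:
  fixes a lam :: "'i \<Rightarrow> real"
  shows "finite I \<Longrightarrow> card (lam ` I) = n \<Longrightarrow> (\<Sum>i\<in>{i\<in>I. lam i = l0}. a i) \<noteq> 0 \<Longrightarrow> finite Z
    \<Longrightarrow> (\<forall>z\<in>Z. (\<Sum>i\<in>I. a i * exp (lam i * z)) = 0) \<Longrightarrow> card Z < n"
proof (induction n arbitrary: I lam a l0 Z)
  case 0
  then have "I = {}" by auto
  then show ?case using 0 by auto
next
  case (Suc n)
  have "{i\<in>I. lam i = l0} \<noteq> {}" using Suc.prems(3) by (metis sum.empty)
  then obtain i0 where i0: "i0 \<in> I" "lam i0 = l0" by blast
  show ?case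
  proof (cases "n = 0")
    case True
    then obtain l where "lam ` I = {l}" using Suc.prems(2) card_1_singletonE by auto
    then have all: "\<And>i. i \<in> I \<Longrightarrow> lam i = l0" using i0 by (metis image_eqI singletonD)
    then have fib: "{i\<in>I. lam i = l0} = I" by auto
    have "(\<Sum>i\<in>I. a i * exp (lam i * z)) = (\<Sum>i\<in>I. a i) * exp (l0 * z)" for z
      by (simp add: all sum_distrib_right)
    then have "(\<Sum>i\<in>I. a i * exp (lam i * z)) \<noteq> 0" for z using Suc.prems(3) fib by simp
    then have "Z = {}" using Suc.prems(5) by auto
    then show ?thesis by simp
  next
    case False
    have "lam ` I - {l0} \<noteq> {}"
    proof
      assume "lam ` I - {l0} = {}"
      then have "lam ` I \<subseteq> {l0}" by auto
      then have "card (lam ` I) \<le> card {l0}" by (intro card_mono) auto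
      then show False using Suc.prems(2) False by auto
    qed
    then obtain l1 where l1: "l1 \<in> lam ` I" "l1 \<noteq> l0" by auto
    show ?thesis
    proof (rule ccontr)
      assume "\<not> card Z < Suc n"
      then obtain Z' where Z': "Z' \<subseteq> Z" "card Z' = Suc n"
        by (meson not_less obtain_subset_with_card_n)
      have fZ': "finite Z'" using Z' Suc.prems(4) finite_subset by blast
      define g where "g z = (\<Sum>i\<in>I. a i * exp ((lam i - l1) * z))" for z
      define g' where "g' z = (\<Sum>i\<in>I. a i * (lam i - l1) * exp ((lam i - l1) * z))" for z
      have der: "(g has_field_derivative g' t) (at t)" for t
        unfolding g_def g'_def
        by (auto intro!: derivative_eq_intros sum.cong)
      have gz: "g z = exp (- l1 * z) * (\<Sum>i\<in>I. a i * exp (lam i * z))" for z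
        unfolding g_def sum_distrib_left
        by (intro sum.cong refl) (simp add: algebra_simps flip: exp_add)
      have "\<forall>z\<in>Z'. g z = 0" using Z' Suc.prems(5) gz by auto
      then obtain W where W: "finite W" "card W = n" "\<forall>w\<in>W. g' w = 0"
        using rolle_count[OF der fZ' Z'(2)] by blast
      define I' where "I' = {i\<in>I. lam i \<noteq> l1}"
      define lam' where "lam' i = lam i - l1" for i
      define a' where "a' i = a i * (lam i - l1)" for i
      have fI': "finite I'" using Suc.prems(1) I'_def by auto
      have g'eq: "g' z = (\<Sum>i\<in>I'. a' i * exp (lam' i * z))" for z
        unfolding g'_def I'_def a'_def lam'_def
        by (rule sum.mono_neutral_right) (use Suc.prems(1) in auto)
      have img: "lam' ` I' = (\<lambda>l. l - l1) ` (lam ` I - {l1})"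
        unfolding lam'_def I'_def by auto
      have "card (lam' ` I') = card (lam ` I - {l1})"
        unfolding img by (rule card_image) (auto simp: inj_on_def)
      also have "\<dots> = n" using Suc.prems(2) l1 Suc.prems(1) by simp
      finally have cI': "card (lam' ` I') = n" .
      have fibeq: "{i\<in>I'. lam' i = l0 - l1} = {i\<in>I. lam i = l0}"
        unfolding I'_def lam'_def using l1 by auto
      have "(\<Sum>i\<in>{i\<in>I'. lam' i = l0 - l1}. a' i) = (l0 - l1) * (\<Sum>i\<in>{i\<in>I. lam i = l0}. a i)"
        unfolding fibeq a'_def sum_distrib_left by (intro sum.cong refl) auto
      then have "(\<Sum>i\<in>{i\<in>I'. lam' i = l0 - l1}. a' i) \<noteq> 0" using l1 Suc.prems(3) by simp
      from Suc.IH[OF fI' cI' this W(1)] W(3) g'eq have "card W < n" by auto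
      then show False using W(2) by simp
    qed
  qed
qed

lemma alt_pascal:
  fixes f :: "nat \<Rightarrow> real"
  shows "(\<Sum>j\<le>Suc n. real (Suc n choose j) * (-1)^j * f j) =
         (\<Sum>j\<le>n. real (n choose j) * (-1)^j * (f j - f (Suc j)))"
proof -
  have "(\<Sum>j\<le>Suc n. real (Suc n choose j) * (-1)^j * f j)
      = f 0 + (\<Sum>j\<le>n. real (Suc n choose Suc j) * (-1)^(Suc j) * f (Suc j))"
    by (subst sum.atMost_Suc_shift) simp
  also have "\<dots> = f 0 + (\<Sum>j\<le>n. real (n choose j) * (-1)^(Suc j) * f (Suc j))
        + (\<Sum>j\<le>n. real (n choose Suc j) * (-1)^(Suc j) * f (Suc j))"
    unfolding add.assoc sum.distrib[symmetric]
    by (intro arg_cong2[where f="(+)"] refl sum.cong) (auto simp: algebra_simps)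
  also have "(\<Sum>j\<le>n. real (n choose Suc j) * (-1)^(Suc j) * f (Suc j))
      = (\<Sum>j\<le>Suc n. real (n choose j) * (-1)^j * f j) - f 0"
    by (subst sum.atMost_Suc_shift) simp
  also have "(\<Sum>j\<le>Suc n. real (n choose j) * (-1)^j * f j) = (\<Sum>j\<le>n. real (n choose j) * (-1)^j * f j)"
    by simp
  finally show ?thesis
    by (simp add: sum.distrib sum_subtractf sum_negf algebra_simps)
qed

lemma fd_poly:
  "d < n \<Longrightarrow> (\<Sum>j\<le>n. real (n choose j) * (-1)^j * (a + real j)^d) = 0"
proof (induction n arbitrary: d a)
  case 0
  then show ?case by simp
next
  case (Suc n)
  have step: "(a + real j)^d - (a + real (Suc j))^d = - (\<Sum>e<d. real (d choose e) * (a + real j)^e)" for j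
  proof -
    have "(a + real (Suc j))^d = ((a + real j) + 1)^d" by (simp add: algebra_simps)
    also have "\<dots> = (\<Sum>e\<le>d. real (d choose e) * (a + real j)^e)"
      by (simp add: binomial_ring)
    also have "\<dots> = (\<Sum>e<d. real (d choose e) * (a + real j)^e) + (a + real j)^d"
      by (simp add: lessThan_Suc_atMost[symmetric])
    finally show ?thesis by simp
  qed
  have "(\<Sum>j\<le>Suc n. real (Suc n choose j) * (-1)^j * (a + real j)^d)
      = (\<Sum>j\<le>n. real (n choose j) * (-1)^j * (- (\<Sum>e<d. real (d choose e) * (a + real j)^e)))"
    by (subst alt_pascal) (simp only: step)
  also have "\<dots> = - (\<Sum>e<d. real (d choose e) * (\<Sum>j\<le>n. real (n choose j) * (-1)^j * (a + real j)^e))"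
    by (simp add: sum_distrib_left sum_negf algebra_simps sum.swap[of _ "{..<d}"])
  also have "\<dots> = 0"
  proof -
    have "(\<Sum>e<d. real (d choose e) * (\<Sum>j\<le>n. real (n choose j) * (-1)^j * (a + real j)^e)) = 0"
    proof (intro sum.neutral ballI)
      fix e assume "e \<in> {..<d}"
      then have "e < n" using Suc.prems by auto
      then show "real (d choose e) * (\<Sum>j\<le>n. real (n choose j) * (-1)^j * (a + real j)^e) = 0"
        using Suc.IH by simp
    qed
    then show ?thesis by simp
  qed
  finally show ?case .
qed

lemma fd_center:
  "d < 2*k \<Longrightarrow> (\<Sum>j=0..2*k. real (2*k choose j) * (-1)^j * (real k - real j)^d) = 0"
proof -
  assume "d < 2*k"
  have "(\<Sum>j=0..2*k. real (2*k choose j) * (-1)^j * (real k - real j)^d)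
     = (-1)^d * (\<Sum>j\<le>2*k. real (2*k choose j) * (-1)^j * (- real k + real j)^d)"
    unfolding atLeast0AtMost sum_distrib_left
    by (intro sum.cong refl) (simp add: power_mult_distrib[symmetric])
  also have "\<dots> = 0" using fd_poly[OF \<open>d < 2*k\<close>, of "- real k"] by simp
  finally show ?thesis .
qed

lemma denom_nonzero:
  fixes p :: real
  assumes p: "0 < p" and ne: "\<not> (\<exists>n::nat. p = 2 * real n)" and kdef: "k = nat \<lceil>p / 2\<rceil>"
  shows "(\<Sum>j=0..2*k. real (2*k choose j) * (-1) ^ j * \<bar>real k - real j\<bar> powr p) \<noteq> 0"
proof
  assume C0: "(\<Sum>j=0..2*k. real (2*k choose j) * (-1) ^ j * \<bar>real k - real j\<bar> powr p) = 0"
  have k1: "k \<ge> 1" using p kdef by linarith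
  define I where "I = {0..2*k} - {k}"
  define lam where "lam j = ln \<bar>real k - real j\<bar>" for j
  define a where "a j = real (2*k choose j) * (-1) ^ j" for j
  have fI: "finite I" unfolding I_def by auto
  have pos: "\<bar>real k - real j\<bar> > 0" if "j \<in> I" for j using that unfolding I_def by auto
  have F: "(\<Sum>j=0..2*k. real (2*k choose j) * (-1) ^ j * \<bar>real k - real j\<bar> powr q)
      = (\<Sum>j\<in>I. a j * exp (lam j * q))" if "q > 0" for q
  proof -
    have "(\<Sum>j=0..2*k. real (2*k choose j) * (-1) ^ j * \<bar>real k - real j\<bar> powr q)
       = (\<Sum>j\<in>I. real (2*k choose j) * (-1) ^ j * \<bar>real k - real j\<bar> powr q)"
      unfolding I_def by (rule sum.mono_neutral_right) auto
    also have "\<dots> = (\<Sum>j\<in>I. a j * exp (lam j * q))"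
      using pos by (intro sum.cong refl) (simp add: a_def lam_def powr_def mult.commute)
    finally show ?thesis .
  qed
  define Z where "Z = insert p ((\<lambda>i. 2 * real i) ` {1..<k})"
  have fZ: "finite Z" unfolding Z_def by auto
  have cZ: "card Z = k"
  proof -
    have "card ((\<lambda>i. 2 * real i) ` {1..<k}) = k - 1"
      by (subst card_image) (auto simp: inj_on_def)
    moreover have "p \<notin> (\<lambda>i. 2 * real i) ` {1..<k}" using ne by auto
    ultimately show ?thesis unfolding Z_def using k1 by simp
  qed
  have zeros: "\<forall>z\<in>Z. (\<Sum>j\<in>I. a j * exp (lam j * z)) = 0"
  proof
    fix z assume "z \<in> Z"
    then consider "z = p" | i where "i \<in> {1..<k}" "z = 2 * real i" unfolding Z_def by auto
    then show "(\<Sum>j\<in>I. a j * exp (lam j * z)) = 0"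
    proof cases
      case 1 then show ?thesis using F[OF p] C0 by simp
    next
      case 2
      have "(\<Sum>j\<in>I. a j * exp (lam j * z))
          = (\<Sum>j=0..2*k. real (2*k choose j) * (-1) ^ j * \<bar>real k - real j\<bar> powr z)"
        using F[of z] 2 by simp
      also have "\<dots> = (\<Sum>j=0..2*k. real (2*k choose j) * (-1) ^ j * (real k - real j) ^ (2*i))"
      proof (intro sum.cong refl)
        fix j
        have "\<bar>real k - real j\<bar> powr z = (real k - real j) ^ (2*i)"
        proof (cases "real k - real j = 0")
          case True then show ?thesis using 2 by simp
        next
          case False
          then have "\<bar>real k - real j\<bar> powr z = \<bar>real k - real j\<bar> ^ (2*i)"
            using 2 powr_realpow[of "\<bar>real k - real j\<bar>" "2*i"] by simp
          then show ?thesis by (simp add: power_even_abs)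
        qed
        then show "real (2*k choose j) * (-1) ^ j * \<bar>real k - real j\<bar> powr z
            = real (2*k choose j) * (-1) ^ j * (real k - real j) ^ (2*i)" by simp
      qed
      also have "\<dots> = 0" using fd_center[of "2*i" k] 2 by simp
      finally show ?thesis .
    qed
  qed
  have fib: "{j\<in>I. lam j = 0} = {k-1, k+1}"
  proof -
    have "lam j = 0 \<longleftrightarrow> (j = k-1 \<or> j = k+1)" if "j \<in> I" for j
    proof -
      have "lam j = 0 \<longleftrightarrow> \<bar>real k - real j\<bar> = 1" unfolding lam_def using pos[OF that] by simp
      also have "\<dots> \<longleftrightarrow> (j = k-1 \<or> j = k+1)" using k1 by (auto simp: abs_if)
      finally show ?thesis .
    qed
    moreover have "k-1 \<in> I" "k+1 \<in> I" unfolding I_def using k1 by auto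
    ultimately show ?thesis by auto
  qed
  have "(\<Sum>j\<in>{j\<in>I. lam j = 0}. a j) = 2 * real (2*k choose (k-1)) * (-1)^(k-1)"
  proof -
    have "(2*k choose (k+1)) = (2*k choose (k-1))"
      using binomial_symmetric[of "k+1" "2*k"] k1 by (simp add: numeral_2_eq_2)
    moreover have "(-1::real)^(k+1) = (-1)^(k-1)"
      using k1 by (metis Suc_diff_1 add_2_eq_Suc' less_le_trans less_numeral_extra(1) power_minus1_odd
          add.commute odd_Suc_minus_one plus_1_eq_Suc power_Suc2 mult_minus1_right minus_minus power_Suc)
    ultimately show ?thesis unfolding fib a_def using k1 by simp
  qed
  then have fibne: "(\<Sum>j\<in>{j\<in>I. lam j = 0}. a j) \<noteq> 0" using k1 by simp
  have "lam ` I \<subseteq> (\<lambda>m. ln (real m)) ` {1..k}"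
  proof
    fix l assume "l \<in> lam ` I"
    then obtain j where j: "j \<in> I" "l = lam j" by auto
    define m where "m = (if j < k then k - j else j - k)"
    have "\<bar>real k - real j\<bar> = real m" "m \<in> {1..k}" using j(1) unfolding m_def I_def by auto
    then show "l \<in> (\<lambda>m. ln (real m)) ` {1..k}" using j(2) unfolding lam_def by auto
  qed
  then have "card (lam ` I) \<le> k"
    by (metis card_atLeastAtMost card_image_le card_mono diff_Suc_1 finite_atLeastAtMost finite_imageI order_trans)
  moreover have "card Z < card (lam ` I)"
    using expsum_zeros[OF fI refl fibne fZ zeros] .
  ultimately show False using cZ by simp
qed

lemma taylor_powr_bound:
  fixes A q :: real and R :: nat
  assumes A: "A > 0"
  shows "\<exists>K b. \<forall>d. \<bar>d\<bar> \<le> A/2 \<longrightarrow> \<bar>(A + d) powr q - (\<Sum>r<R. b r * d^r)\<bar> \<le> K * \<bar>d\<bar>^R"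
proof -
  define P where "P m = (\<Prod>i<m. (q - real i))" for m
  define diff where "diff m t = P m * (A + t) powr (q - real m)" for m t
  define b where "b r = diff r 0 / fact r" for r
  define K where "K = \<bar>P R\<bar> * ((A/2) powr (q - real R) + (3*A/2) powr (q - real R)) / fact R"
  have derv: "DERIV (diff m) t :> diff (Suc m) t" if "A + t > 0" for m t
  proof -
    have "DERIV (\<lambda>t. (A + t) powr (q - real m)) t :> (q - real m) * (A + t) powr (q - real m - of_nat 1) * 1"
      by (rule DERIV_fun_powr) (auto intro!: derivative_eq_intros that)
    then have "DERIV (diff m) t :> P m * ((q - real m) * (A + t) powr (q - real m - of_nat 1) * 1)"
      unfolding diff_def by (rule DERIV_cmult)
    moreover have "P m * ((q - real m) * (A + t) powr (q - real m - of_nat 1) * 1) = diff (Suc m) t"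
      unfolding diff_def P_def by (simp add: algebra_simps)
    ultimately show ?thesis by simp
  qed
  have "\<bar>(A + d) powr q - (\<Sum>r<R. b r * d^r)\<bar> \<le> K * \<bar>d\<bar>^R" if d: "\<bar>d\<bar> \<le> A/2" for d
  proof -
    have "\<exists>t. \<bar>t\<bar> \<le> \<bar>d\<bar> \<and> (\<lambda>d. (A + d) powr q) d = (\<Sum>m<R. diff m 0 / (fact m) * d ^ m) + diff R t / (fact R) * d ^ R"
    proof (rule Maclaurin_bi_le)
      show "diff 0 = (\<lambda>d. (A + d) powr q)" unfolding diff_def P_def by auto
      show "\<forall>m t. m < R \<and> \<bar>t\<bar> \<le> \<bar>d\<bar> \<longrightarrow> DERIV (diff m) t :> diff (Suc m) t"
        using d A by (auto intro!: derv)
    qed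
    then obtain t where t: "\<bar>t\<bar> \<le> \<bar>d\<bar>" "(A + d) powr q = (\<Sum>m<R. b m * d ^ m) + diff R t / (fact R) * d ^ R"
      unfolding b_def by auto
    have lo: "A/2 \<le> A + t" and hi: "A + t \<le> 3*A/2" using t(1) d by auto
    have pw: "(A + t) powr (q - real R) \<le> (A/2) powr (q - real R) + (3*A/2) powr (q - real R)"
    proof (cases "q - real R \<ge> 0")
      case True
      then have "(A + t) powr (q - real R) \<le> (3*A/2) powr (q - real R)"
        using lo hi A by (intro powr_mono2) auto
      then show ?thesis by (smt (verit) powr_ge_zero)
    next
      case False
      then have "(A + t) powr (q - real R) \<le> (A/2) powr (q - real R)"
        using lo hi A by (intro powr_mono2') auto
      then show ?thesis by (smt (verit) powr_ge_zero)
    qed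
    have "\<bar>(A + d) powr q - (\<Sum>r<R. b r * d^r)\<bar> = \<bar>diff R t\<bar> / fact R * \<bar>d\<bar> ^ R"
      using t(2) by (simp add: abs_mult power_abs)
    also have "\<bar>diff R t\<bar> = \<bar>P R\<bar> * (A + t) powr (q - real R)"
      unfolding diff_def by (simp add: abs_mult)
    also have "\<bar>P R\<bar> * (A + t) powr (q - real R) / fact R * \<bar>d\<bar> ^ R \<le> K * \<bar>d\<bar>^R"
      unfolding K_def
      by (intro mult_right_mono divide_right_mono mult_left_mono pw) auto
    finally show ?thesis .
  qed
  then show ?thesis by blast
qed

definition Sd :: "nat \<Rightarrow> nat \<Rightarrow> real" where
  "Sd k d = (\<Sum>j=0..2*k. real (2*k choose j) * (-1)^j * (real k - real j)^d)"

lemma Sd_zero: "d < 2*k \<Longrightarrow> Sd k d = 0"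
  unfolding Sd_def by (erule fd_center)

lemma Q_bound:
  fixes u e X :: real
  assumes u: "\<bar>u\<bar> \<le> X * e" and e: "0 \<le> e" "e \<le> 1" and X: "0 \<le> X"
  shows "\<bar>\<Sum>j=0..2*k. real (2*k choose j) * (-1)^j * (2*(real k - real j)*u + (real k - real j)^2*e^2)^r\<bar>
     \<le> (\<Sum>l\<le>r. real (r choose l) * 2^(r-l) * X^(r-l) * \<bar>Sd k (r+l)\<bar>) * e^(2*k)"
proof -
  have expand: "(2*t*u + t^2*e^2)^r = (\<Sum>l\<le>r. real (r choose l) * (e^(2*l) * 2^(r-l) * u^(r-l)) * t^(r+l))" for t
  proof -
    have "(2*t*u + t^2*e^2)^r = (t^2*e^2 + 2*t*u)^r" by (simp add: add.commute)
    also have "\<dots> = (\<Sum>l\<le>r. real (r choose l) * (t^2*e^2)^l * (2*t*u)^(r-l))"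
      by (rule binomial_ring)
    also have "\<dots> = (\<Sum>l\<le>r. real (r choose l) * (e^(2*l) * 2^(r-l) * u^(r-l)) * t^(r+l))"
    proof (intro sum.cong refl)
      fix l assume "l \<in> {..r}"
      then have "r + l = 2*l + (r-l)" by simp
      then have h1: "t^(r+l) = t^(2*l) * t^(r-l)" by (simp only: power_add)
      have h2: "(t^2*e^2)^l = e^(2*l) * t^(2*l)" by (simp add: power_mult_distrib power_mult)
      have h3: "(2*t*u)^(r-l) = 2^(r-l) * u^(r-l) * t^(r-l)" by (simp add: power_mult_distrib)
      show "real (r choose l) * (t^2*e^2)^l * (2*t*u)^(r-l) = real (r choose l) * (e^(2*l) * 2^(r-l) * u^(r-l)) * t^(r+l)"
        unfolding h1 h2 h3 by (simp only: mult_ac)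
    qed
    finally show ?thesis .
  qed
  have eq: "(\<Sum>j=0..2*k. real (2*k choose j) * (-1)^j * (2*(real k - real j)*u + (real k - real j)^2*e^2)^r)
      = (\<Sum>l\<le>r. real (r choose l) * (e^(2*l) * 2^(r-l) * u^(r-l)) * Sd k (r+l))"
    unfolding expand Sd_def sum_distrib_left
    by (subst sum.swap) (simp add: algebra_simps)
  have "\<bar>\<Sum>j=0..2*k. real (2*k choose j) * (-1)^j * (2*(real k - real j)*u + (real k - real j)^2*e^2)^r\<bar>
      = \<bar>\<Sum>l\<le>r. real (r choose l) * (e^(2*l) * 2^(r-l) * u^(r-l)) * Sd k (r+l)\<bar>" by (simp only: eq)
  also have "\<dots> \<le> (\<Sum>l\<le>r. \<bar>real (r choose l) * (e^(2*l) * 2^(r-l) * u^(r-l)) * Sd k (r+l)\<bar>)"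
    by (rule sum_abs)
  also have "\<dots> \<le> (\<Sum>l\<le>r. real (r choose l) * 2^(r-l) * X^(r-l) * \<bar>Sd k (r+l)\<bar> * e^(2*k))"
  proof (intro sum_mono)
    fix l assume l: "l \<in> {..r}"
    show "\<bar>real (r choose l) * (e^(2*l) * 2^(r-l) * u^(r-l)) * Sd k (r+l)\<bar> \<le> real (r choose l) * 2^(r-l) * X^(r-l) * \<bar>Sd k (r+l)\<bar> * e^(2*k)"
    proof (cases "r + l < 2*k")
      case True then show ?thesis by (simp add: Sd_zero)
    next
      case False
      have "\<bar>u^(r-l)\<bar> \<le> (X*e)^(r-l)" unfolding power_abs by (intro power_mono u) auto
      then have "e^(2*l) * \<bar>u^(r-l)\<bar> \<le> e^(2*l) * (X*e)^(r-l)" using e by (intro mult_left_mono) auto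
      also have "\<dots> = X^(r-l) * e^(r+l)" using l
        by (simp add: power_mult_distrib power_add[symmetric] mult_2 add.commute)
      also have "\<dots> \<le> X^(r-l) * e^(2*k)" using False e X
        by (intro mult_left_mono power_decreasing) auto
      finally have "e^(2*l) * \<bar>u^(r-l)\<bar> \<le> X^(r-l) * e^(2*k)" .
      then have "real (r choose l) * 2^(r-l) * \<bar>Sd k (r+l)\<bar> * (e^(2*l) * \<bar>u^(r-l)\<bar>)
          \<le> real (r choose l) * 2^(r-l) * \<bar>Sd k (r+l)\<bar> * (X^(r-l) * e^(2*k))"
        by (intro mult_left_mono) auto
      then show ?thesis using e by (simp add: abs_mult algebra_simps)
    qed
  qed
  also have "\<dots> = (\<Sum>l\<le>r. real (r choose l) * 2^(r-l) * X^(r-l) * \<bar>Sd k (r+l)\<bar>) * e^(2*k)"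
    by (rule sum_distrib_right[symmetric])
  finally show ?thesis .
qed

lemma norm_powr_sq:
  fixes y :: "'a::real_inner"
  shows "norm y powr p = (norm y ^ 2) powr (p/2)"
proof (cases "y = 0")
  case True then show ?thesis by simp
next
  case False
  then have "norm y powr real 2 = norm y ^ 2" using powr_realpow[of "norm y" 2] by simp
  then have "(norm y ^ 2) powr (p/2) = (norm y powr 2) powr (p/2)" by simp
  also have "\<dots> = norm y powr p" unfolding powr_powr by simp
  finally show ?thesis by (rule sym)
qed

lemma main_bound:
  fixes x :: "'a::real_inner" and p :: real and k :: nat
  assumes x: "x \<noteq> 0"
  shows "\<exists>M \<delta>. \<delta> > 0 \<and> (\<forall>h. norm h < \<delta> \<longrightarrow>
     \<bar>\<Sum>j=0..2*k. real (2*k choose j) * (-1)^j * norm (x + (real k - real j) *\<^sub>R h) powr p\<bar> \<le> M * norm h ^ (2*k))"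
proof -
  define A where "A = norm x ^ 2"
  define X where "X = norm x"
  define q where "q = p / 2"
  have A: "A > 0" using x unfolding A_def by simp
  obtain K b where Kb: "\<And>d. \<bar>d\<bar> \<le> A/2 \<Longrightarrow> \<bar>(A + d) powr q - (\<Sum>r<2*k. b r * d^r)\<bar> \<le> K * \<bar>d\<bar>^(2*k)"
    using taylor_powr_bound[OF A, of q "2*k"] by blast
  define L where "L = 2 * real k * X + real k ^ 2 + 1"
  have "0 \<le> 2 * real k * X + real k ^ 2" unfolding X_def by simp
  then have L: "L > 0" unfolding L_def by linarith
  define \<delta> where "\<delta> = min 1 (A / (2*L))"
  have \<delta>: "\<delta> > 0" unfolding \<delta>_def using A L by simp
  define c where "c j = real (2*k choose j) * (-1)^j" for j :: nat
  define Mr where "Mr r = (\<Sum>l\<le>r. real (r choose l) * 2^(r-l) * X^(r-l) * \<bar>Sd k (r+l)\<bar>)" for r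
  define M where "M = (\<Sum>r<2*k. \<bar>b r\<bar> * Mr r) + (\<Sum>j=0..2*k. \<bar>c j\<bar> * \<bar>K\<bar> * L^(2*k))"
  have "\<bar>\<Sum>j=0..2*k. real (2*k choose j) * (-1)^j * norm (x + (real k - real j) *\<^sub>R h) powr p\<bar> \<le> M * norm h ^ (2*k)"
    if h: "norm h < \<delta>" for h
  proof -
    define e where "e = norm h"
    define u where "u = inner x h"
    define t where "t j = real k - real j" for j :: nat
    define d where "d j = 2 * t j * u + t j ^ 2 * e ^ 2" for j
    have e0: "0 \<le> e" and e1: "e \<le> 1" and eA: "e \<le> A / (2*L)" using h unfolding e_def \<delta>_def by auto
    have u: "\<bar>u\<bar> \<le> X * e" unfolding u_def X_def e_def by (rule Cauchy_Schwarz_ineq2)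
    have X0: "0 \<le> X" unfolding X_def by simp
    have tb: "\<bar>t j\<bar> \<le> real k" if "j \<in> {0..2*k}" for j using that unfolding t_def by auto
    have normeq: "norm (x + t j *\<^sub>R h) powr p = (A + d j) powr q" for j
    proof -
      have "norm (x + t j *\<^sub>R h) ^ 2 = A + d j"
        unfolding power2_norm_eq_inner A_def d_def u_def e_def
        by (simp add: inner_add inner_commute algebra_simps power2_eq_square)
      then show ?thesis using norm_powr_sq[of "x + t j *\<^sub>R h" p] unfolding q_def by simp
    qed
    have dL: "\<bar>d j\<bar> \<le> L * e" if "j \<in> {0..2*k}" for j
    proof -
      have "\<bar>d j\<bar> \<le> 2 * \<bar>t j\<bar> * \<bar>u\<bar> + \<bar>t j\<bar>^2 * e^2"
        unfolding d_def by (simp add: abs_mult power_abs abs_triangle_ineq[THEN order_trans])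
      also have "\<dots> \<le> 2 * real k * (X * e) + real k ^ 2 * e"
      proof -
        have m1: "\<bar>t j\<bar> * \<bar>u\<bar> \<le> real k * (X * e)"
          using mult_mono[OF tb[OF that] u] by simp
        have p1: "\<bar>t j\<bar>^2 \<le> real k ^ 2" using power_mono[OF tb[OF that], of 2] by simp
        have e2: "e^2 \<le> e" using e0 e1 by (simp add: power2_eq_square mult_left_le)
        have m2: "\<bar>t j\<bar>^2 * e^2 \<le> real k ^ 2 * e"
          using mult_mono[OF p1 e2] by simp
        show ?thesis using m1 m2 by linarith
      qed
      also have "\<dots> \<le> L * e" unfolding L_def using e0 X0 by (simp add: algebra_simps)
      finally show ?thesis .
    qed
    have dA: "\<bar>d j\<bar> \<le> A/2" if "j \<in> {0..2*k}" for j
    proof -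
      have "L * e \<le> L * (A / (2*L))" using eA L by (intro mult_left_mono) auto
      also have "\<dots> = A/2" using L by simp
      finally show ?thesis using dL[OF that] by simp
    qed
    have "(\<Sum>j=0..2*k. real (2*k choose j) * (-1)^j * norm (x + (real k - real j) *\<^sub>R h) powr p)
       = (\<Sum>j=0..2*k. c j * (A + d j) powr q)"
      using normeq unfolding c_def t_def by simp
    also have "\<dots> = (\<Sum>r<2*k. b r * (\<Sum>j=0..2*k. c j * d j ^ r))
        + (\<Sum>j=0..2*k. c j * ((A + d j) powr q - (\<Sum>r<2*k. b r * d j^r)))"
    proof -
      have s1: "(\<Sum>j=0..2*k. c j * (\<Sum>r<2*k. b r * d j^r)) = (\<Sum>r<2*k. b r * (\<Sum>j=0..2*k. c j * d j ^ r))"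
        unfolding sum_distrib_left
        by (subst sum.swap) (simp only: mult_ac)
      have "(\<Sum>j=0..2*k. c j * (A + d j) powr q) = (\<Sum>j=0..2*k. c j * (\<Sum>r<2*k. b r * d j^r))
        + (\<Sum>j=0..2*k. c j * ((A + d j) powr q - (\<Sum>r<2*k. b r * d j^r)))"
        unfolding sum.distrib[symmetric] by (intro sum.cong refl) (simp add: algebra_simps)
      then show ?thesis unfolding s1 .
    qed
    finally have Neq: "(\<Sum>j=0..2*k. real (2*k choose j) * (-1)^j * norm (x + (real k - real j) *\<^sub>R h) powr p)
       = (\<Sum>r<2*k. b r * (\<Sum>j=0..2*k. c j * d j ^ r))
        + (\<Sum>j=0..2*k. c j * ((A + d j) powr q - (\<Sum>r<2*k. b r * d j^r)))" .
    have B1: "\<bar>\<Sum>r<2*k. b r * (\<Sum>j=0..2*k. c j * d j ^ r)\<bar> \<le> (\<Sum>r<2*k. \<bar>b r\<bar> * Mr r) * e^(2*k)"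
    proof -
      have "\<bar>\<Sum>r<2*k. b r * (\<Sum>j=0..2*k. c j * d j ^ r)\<bar> \<le> (\<Sum>r<2*k. \<bar>b r * (\<Sum>j=0..2*k. c j * d j ^ r)\<bar>)"
        by (rule sum_abs)
      also have "\<dots> \<le> (\<Sum>r<2*k. \<bar>b r\<bar> * Mr r * e^(2*k))"
      proof (intro sum_mono)
        fix r
        have "\<bar>\<Sum>j=0..2*k. c j * d j ^ r\<bar> \<le> Mr r * e^(2*k)"
          using Q_bound[OF u e0 e1 X0, of k r] unfolding Mr_def c_def d_def t_def by simp
        then show "\<bar>b r * (\<Sum>j=0..2*k. c j * d j ^ r)\<bar> \<le> \<bar>b r\<bar> * Mr r * e^(2*k)"
          by (simp add: abs_mult mult.assoc mult_left_mono)
      qed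
      also have "\<dots> = (\<Sum>r<2*k. \<bar>b r\<bar> * Mr r) * e^(2*k)"
        by (rule sum_distrib_right[symmetric])
      finally show ?thesis .
    qed
    have B2: "\<bar>\<Sum>j=0..2*k. c j * ((A + d j) powr q - (\<Sum>r<2*k. b r * d j^r))\<bar>
        \<le> (\<Sum>j=0..2*k. \<bar>c j\<bar> * \<bar>K\<bar> * L^(2*k)) * e^(2*k)"
    proof -
      have "\<bar>\<Sum>j=0..2*k. c j * ((A + d j) powr q - (\<Sum>r<2*k. b r * d j^r))\<bar>
          \<le> (\<Sum>j=0..2*k. \<bar>c j * ((A + d j) powr q - (\<Sum>r<2*k. b r * d j^r))\<bar>)"
        by (rule sum_abs)
      also have "\<dots> \<le> (\<Sum>j=0..2*k. \<bar>c j\<bar> * \<bar>K\<bar> * L^(2*k) * e^(2*k))"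
      proof (intro sum_mono)
        fix j assume j: "j \<in> {0..2*k}"
        have "\<bar>(A + d j) powr q - (\<Sum>r<2*k. b r * d j^r)\<bar> \<le> K * \<bar>d j\<bar>^(2*k)"
          using Kb[OF dA[OF j]] .
        also have "\<dots> \<le> \<bar>K\<bar> * (L * e)^(2*k)"
          using dL[OF j] by (intro mult_mono power_mono) auto
        finally have "\<bar>(A + d j) powr q - (\<Sum>r<2*k. b r * d j^r)\<bar> \<le> \<bar>K\<bar> * L^(2*k) * e^(2*k)"
          by (simp add: power_mult_distrib mult.assoc)
        then show "\<bar>c j * ((A + d j) powr q - (\<Sum>r<2*k. b r * d j^r))\<bar> \<le> \<bar>c j\<bar> * \<bar>K\<bar> * L^(2*k) * e^(2*k)"
          by (simp add: abs_mult mult.assoc mult_left_mono)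
      qed
      also have "\<dots> = (\<Sum>j=0..2*k. \<bar>c j\<bar> * \<bar>K\<bar> * L^(2*k)) * e^(2*k)"
        by (rule sum_distrib_right[symmetric])
      finally show ?thesis .
    qed
    have "\<bar>\<Sum>j=0..2*k. real (2*k choose j) * (-1)^j * norm (x + (real k - real j) *\<^sub>R h) powr p\<bar>
       \<le> (\<Sum>r<2*k. \<bar>b r\<bar> * Mr r) * e^(2*k) + (\<Sum>j=0..2*k. \<bar>c j\<bar> * \<bar>K\<bar> * L^(2*k)) * e^(2*k)"
      unfolding Neq using B1 B2 abs_triangle_ineq by (smt (verit))
    also have "\<dots> = M * norm h ^ (2*k)" unfolding M_def e_def by (simp add: algebra_simps)
    finally show ?thesis .
  qed
  then show ?thesis using \<delta> by blast
qed

theorem lemma3p9: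
  fixes x :: "'a :: {real_inner, complete_space, second_countable_topology}"
    and p :: real
  assumes "0 < p"
    and "\<not> (\<exists>n::nat. p = 2 * real n)"
  defines "k \<equiv> nat \<lceil>p / 2\<rceil>"
  shows "((\<lambda>h. (\<Sum>j=0..2*k. real (2*k choose j) * (-1) ^ j * norm (x + (real k - real j) *\<^sub>R h) powr p)
              / ((\<Sum>j=0..2*k. real (2*k choose j) * (-1) ^ j * \<bar>real k - real j\<bar> powr p) * norm h powr p))
          \<longlongrightarrow> (if x = 0 then 1 else 0)) (at 0)"
proof -
  define Cd where "Cd = (\<Sum>j=0..2*k. real (2*k choose j) * (-1) ^ j * \<bar>real k - real j\<bar> powr p)"
  have kk: "k = nat \<lceil>p / 2\<rceil>" unfolding k_def by simp
  have Cne: "Cd \<noteq> 0" using denom_nonzero[OF assms(1) assms(2) kk] unfolding Cd_def .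
  define N where "N h = (\<Sum>j=0..2*k. real (2*k choose j) * (-1) ^ j * norm (x + (real k - real j) *\<^sub>R h) powr p)" for h
  have goal: "((\<lambda>h. N h / (Cd * norm h powr p)) \<longlongrightarrow> (if x = 0 then 1 else 0)) (at 0)"
  proof (cases "x = 0")
    case True
    have "eventually (\<lambda>h. 1 = N h / (Cd * norm h powr p)) (at 0)"
      unfolding eventually_at
    proof (intro exI[of _ 1] conjI ballI impI)
      fix h :: 'a assume "h \<noteq> 0 \<and> dist h 0 < 1"
      then have h: "h \<noteq> 0" by simp
      have "N h = (\<Sum>j=0..2*k. real (2*k choose j) * (-1) ^ j * \<bar>real k - real j\<bar> powr p) * norm h powr p"
        unfolding N_def True sum_distrib_right
        by (intro sum.cong refl) (simp add: powr_mult)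
      then have "N h = Cd * norm h powr p" unfolding Cd_def .
      then show "1 = N h / (Cd * norm h powr p)" using h Cne by simp
    qed simp
    then show ?thesis using True by (simp add: Lim_transform_eventually[OF tendsto_const])
  next
    case False
    obtain M \<delta> where M: "\<delta> > 0" "\<And>h. norm h < \<delta> \<Longrightarrow> \<bar>N h\<bar> \<le> M * norm h ^ (2*k)"
      using main_bound[OF False, of k p] unfolding N_def by blast
    have kp: "real (2*k) - p > 0"
    proof -
      have "real k \<ge> p / 2" unfolding kk using assms(1) by linarith
      moreover have "real (2*k) \<noteq> p" using assms(2) by auto
      ultimately show ?thesis by simp
    qed
    have "((\<lambda>h. N h / (Cd * norm h powr p)) \<longlongrightarrow> 0) (at 0)"
    proof (rule Lim_null_comparison)
      show "eventually (\<lambda>h. norm (N h / (Cd * norm h powr p)) \<le> \<bar>M\<bar> / \<bar>Cd\<bar> * norm h powr (real (2*k) - p)) (at 0)"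
        unfolding eventually_at
      proof (intro exI[of _ \<delta>] conjI ballI impI)
        fix h :: 'a assume "h \<noteq> 0 \<and> dist h 0 < \<delta>"
        then have h: "h \<noteq> 0" "norm h < \<delta>" by auto
        have np: "norm h > 0" using h by simp
        have "norm (N h / (Cd * norm h powr p)) = \<bar>N h\<bar> / (\<bar>Cd\<bar> * norm h powr p)"
          by (simp add: abs_mult)
        also have "\<dots> \<le> (\<bar>M\<bar> * norm h powr real (2*k)) / (\<bar>Cd\<bar> * norm h powr p)"
        proof (intro divide_right_mono)
          have "\<bar>N h\<bar> \<le> M * norm h ^ (2*k)" using M(2)[OF h(2)] .
          also have "\<dots> \<le> \<bar>M\<bar> * norm h ^ (2*k)" by (intro mult_right_mono) auto
          also have "norm h ^ (2*k) = norm h powr real (2*k)" by (rule sym[OF powr_realpow[OF np]])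
          finally show "\<bar>N h\<bar> \<le> \<bar>M\<bar> * norm h powr real (2*k)" .
        qed (use Cne in simp)
        also have "\<dots> = \<bar>M\<bar> / \<bar>Cd\<bar> * norm h powr (real (2*k) - p)"
          using np Cne by (simp add: powr_diff)
        finally show "norm (N h / (Cd * norm h powr p)) \<le> \<bar>M\<bar> / \<bar>Cd\<bar> * norm h powr (real (2*k) - p)" .
      qed (use M(1) in simp)
      have "((\<lambda>h::'a. norm h powr (real (2*k) - p)) \<longlongrightarrow> 0) (at 0)"
      proof (rule tendsto_zero_powrI)
        show "((\<lambda>h::'a. norm h) \<longlongrightarrow> 0) (at 0)"
          using tendsto_norm[OF tendsto_ident_at[of 0 UNIV]] by simp
      qed (use kp in auto)
      then show "((\<lambda>h::'a. \<bar>M\<bar> / \<bar>Cd\<bar> * norm h powr (real (2*k) - p)) \<longlongrightarrow> 0) (at 0)"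
        using tendsto_mult[OF tendsto_const[of "\<bar>M\<bar> / \<bar>Cd\<bar>"]] by fastforce
    qed
    then show ?thesis using False by simp
  qed
  then show ?thesis unfolding N_def Cd_def .
qed

end
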